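(* Let $p>3$ be a prime, $\zeta=e^{2\pi i/p}$, $K=\mathbb{Q}(\zeta)$, and let $x,y,z\in\mathbb{Z}\setminus\{0\}$ be coprime with $x^p+y^p+z^p=0$ and $p\mid y$. Let $q\ne p$ be a prime and $\mathfrak{q}_K$ a prime ideal of $\mathbb{Z}_K$ above $q$. Then for $k=1,\dots,p-2$: (i) if $\mathfrak{q}_K\mid x\zeta-y$ then $\big(\frac{x+\zeta^k y}{\mathfrak{q}_K}\big)_K=\big(\frac{\zeta^{k/2}}{\mathfrak{q}_K}\big)_K\big(\frac{\epsilon_{k+1}}{\mathfrak{q}_K}\big)_K$; (ii) if $\mathfrak{q}_K\mid z\zeta-y$ then $\big(\frac{z+\zeta^k y}{\mathfrak{q}_K}\big)_K=\big(\frac{\zeta^{k/2}}{\mathfrak{q}_K}\big)_K\big(\frac{\epsilon_{k+1}}{\mathfrak{q}_K}\big)_K$; (iii) if $\mathfrak{q}_K\mid x\zeta-z$ then $\big(\frac{x+\zeta^k z}{\mathfrak{q}_K}\big)_K\big(\frac{p}{\mathfrak{q}_K}\big)_K=\big(\frac{\zeta^{k/2}}{\mathfrak{q}_K}\big)_K\big(\frac{\epsilon_{k+1}}{\mathfrak{q}_K}\big)_K$.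
   Context: Exponents of $\zeta$ are read modulo $p$, with $1/2$ denoting the inverse of $2$ modulo $p$. For $1\le a\le p-1$, $\epsilon_a=\zeta^{(1-a)/2}\cdot\frac{1+\zeta^a}{1+\zeta}$ (a real cyclotomic unit; $\epsilon_1=1$). For a prime ideal $\mathfrak{P}$ of $\mathbb{Z}_K$ not above $p$ and $\alpha\in K$ prime to $\mathfrak{P}$, $(\alpha/\mathfrak{P})_K$ is the unique $\zeta^\mu$ with $\alpha^{(N\mathfrak{P}-1)/p}\equiv\zeta^\mu\pmod{\mathfrak{P}}$, $N\mathfrak{P}=|\mathbb{Z}_K/\mathfrak{P}|$. *)

theory Defs
  imports "HOL-Computational_Algebra.Computational_Algebra" "HOL-Algebra.QuotRing"
begin

definition zeta :: "nat \<Rightarrow> complex" where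
  "zeta p = cis (2 * pi / real p)"

definition cyc_field :: "nat \<Rightarrow> complex set" where
  "cyc_field p = {a. \<exists>f :: rat poly. a = poly (map_poly of_rat f) (zeta p)}"

definition ZK :: "nat \<Rightarrow> complex set" where
  "ZK p = {a \<in> cyc_field p. algebraic_int a}"

definition ZK_ring :: "nat \<Rightarrow> complex ring" where
  "ZK_ring p = \<lparr>carrier = ZK p, monoid.mult = (*), one = 1, zero = 0, add = (+)\<rparr>"

definition ideal_norm :: "nat \<Rightarrow> complex set \<Rightarrow> nat" where
  "ideal_norm p P = card (carrier (ZK_ring p Quot P))"

definition pres :: "nat \<Rightarrow> complex set \<Rightarrow> complex \<Rightarrow> complex" where
  "pres p P a = (THE w. (\<exists>\<mu>::nat. w = zeta p ^ \<mu>) \<and>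
                        a ^ ((ideal_norm p P - 1) div p) - w \<in> P)"

(* zeta^(k/2), with 1/2 the inverse of 2 mod p, namely (p+1)/2 *)
definition zeta_half :: "nat \<Rightarrow> nat \<Rightarrow> complex" where
  "zeta_half p k = zeta p ^ (k * ((p + 1) div 2))"

definition eps :: "nat \<Rightarrow> nat \<Rightarrow> complex" where
  "eps p a = zeta p powi ((1 - int a) * int ((p + 1) div 2)) *
             (1 + zeta p ^ a) / (1 + zeta p)"

end

theory Submission imports Defs "HOL-Computational_Algebra.Nth_Powers" "HOL-Number_Theory.Cong" "HOL-Algebra.Multiplicative_Group" "HOL-Computational_Algebra.Fundamental_Theorem_Algebra" begin

lemma zeta_pow_p: "p > 0 \<Longrightarrow> zeta p ^ p = 1"
  unfolding zeta_def by (simp add: DeMoivre)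

lemma zeta_pow_mod: "p > 0 \<Longrightarrow> zeta p ^ n = zeta p ^ (n mod p)"
proof -
  assume "p > 0"
  have "zeta p ^ n = (zeta p ^ p) ^ (n div p) * zeta p ^ (n mod p)"
    by (simp only: power_mult[symmetric] power_add[symmetric] mult_div_mod_eq)
  thus ?thesis using zeta_pow_p[OF \<open>p>0\<close>] by simp
qed

lemma zeta_ne1: "p > 1 \<Longrightarrow> zeta p \<noteq> 1"
proof
  assume p: "p > 1" and "zeta p = 1"
  hence "Re (zeta p) = 1" by simp
  hence "cos (2 * pi / real p) = 1" unfolding zeta_def by simp
  moreover have "cos (2 * pi / real p) < 1"
  proof -
    have a: "0 < 2 * pi / real p" using p by simp
    have "2 * pi / real p \<le> 2 * pi / 2" using p pi_gt_zero by (intro divide_left_mono) auto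
    hence b: "2 * pi / real p \<le> pi" by simp
    show ?thesis using cos_monotone_0_pi[of 0 "2 * pi / real p"] a b by simp
  qed
  ultimately show False by simp
qed

lemma zeta_sum: "p > 1 \<Longrightarrow> (\<Sum>j<p. zeta p ^ j) = 0"
  using zeta_ne1[of p] zeta_pow_p[of p]
  by (simp add: geometric_sum)


lemma zeta_alg: "p > 0 \<Longrightarrow> zeta p \<in> ZK p"
proof -
  assume p: "p > 0"
  have "zeta p \<in> cyc_field p" unfolding cyc_field_def
    by (rule CollectI, rule exI[of _ "[:0,1:]"]) (simp add: map_poly_pCons)
  moreover have "algebraic_int (zeta p)"
    by (rule algebraic_int_root[of 1 "Polynomial.monom 1 p"]) (use p zeta_pow_p[OF p] in \<open>auto simp: poly_monom degree_monom_eq coeff_monom\<close>)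
  ultimately show ?thesis unfolding ZK_def by simp
qed

lemma finite_domain_fermat:
  fixes D (structure)
  assumes D: "domain D" and fin: "finite (carrier D)" and x: "x \<in> carrier D" "x \<noteq> \<zero>"
  shows "x [^] (card (carrier D) - 1) = \<one>"
proof -
  interpret domain D by (rule D)
  have units: "y \<in> Units D" if y: "y \<in> carrier D - {\<zero>}" for y
  proof -
    have inj: "inj_on (\<lambda>c. y \<otimes> c) (carrier D)"
      using y m_lcancel by (auto simp: inj_on_def)
    have "(\<lambda>c. y \<otimes> c) ` carrier D = carrier D"
      by (rule endo_inj_surj[OF fin _ inj]) (use y in auto)
    hence "\<one> \<in> (\<lambda>c. y \<otimes> c) ` carrier D" by simp
    then obtain c where c: "c \<in> carrier D" "y \<otimes> c = \<one>" by auto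
    hence "c \<otimes> y = \<one>" using y m_comm by auto
    thus ?thesis using c y unfolding Units_def by auto
  qed
  have F: "field D" by (rule field_intro2) (use units in auto)
  interpret field D by (rule F)
  have G: "group (mult_of D)" by (rule field_mult_group)
  have "x [^]\<^bsub>mult_of D\<^esub> order (mult_of D) = \<one>\<^bsub>mult_of D\<^esub>"
    by (rule group.pow_order_eq_1[OF G]) (use x in simp)
  moreover have "order (mult_of D) = card (carrier D) - 1"
    using order_mult_of[OF fin] by (simp add: order_def)
  ultimately show ?thesis by (simp add: nat_pow_mult_of)
qed

lemma pth_power:
  fixes a b c :: int
  assumes cop: "coprime a b" and e: "a * b = c ^ n" and o: "odd n"
  shows "\<exists>t. a = t ^ n"
proof -
  have c1: "coprime (nat \<bar>a\<bar>) (nat \<bar>b\<bar>)" using cop by simp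
  have "nat \<bar>a\<bar> * nat \<bar>b\<bar> = nat \<bar>a * b\<bar>" by (simp add: nat_abs_mult_distrib)
  also have "\<dots> = nat (\<bar>c\<bar> ^ n)" using e by (simp add: power_abs)
  also have "\<dots> = nat \<bar>c\<bar> ^ n" by (simp add: nat_power_eq)
  finally have "is_nth_power n (nat \<bar>a\<bar> * nat \<bar>b\<bar>)" by auto
  hence "is_nth_power n (nat \<bar>a\<bar>)" using is_nth_power_mult_coprime_nat_iff[OF c1] by blast
  then obtain t where t: "nat \<bar>a\<bar> = t ^ n" by (auto elim: is_nth_powerE)
  hence ta: "\<bar>a\<bar> = int t ^ n" by (metis int_nat_eq abs_ge_zero nat_0_le of_nat_power)
  show ?thesis
  proof (cases "a \<ge> 0")
    case True thus ?thesis using ta by auto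
  next
    case False
    hence "a = - (int t ^ n)" using ta by linarith
    also have "\<dots> = (- int t) ^ n" using o by (simp add: power_minus_odd)
    finally show ?thesis by blast
  qed
qed

lemma binom_Q:
  fixes x s :: int and p :: nat
  assumes pp: "prime p" and op: "odd p" and p3: "p \<ge> 3"
  shows "\<exists>Q. x ^ p + (s - x) ^ p = s * Q \<and> s dvd (Q - int p * x ^ (p - 1))
           \<and> (int p dvd s \<longrightarrow> int p ^ 2 dvd (Q - int p * x ^ (p - 1)))
           \<and> int p dvd (Q - s ^ (p - 1))"
proof -
  define T where "T i = of_nat (p choose i) * s ^ i * (- x) ^ (p - i)" for i
  define U where "U i = of_nat (p choose i) * s ^ (i - 1) * (- x) ^ (p - i)" for i
  have TU: "T i = s * U i" if "i \<ge> 1" for i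
  proof -
    have "s ^ i = s * s ^ (i - 1)" using that by (simp add: power_eq_if)
    thus ?thesis by (simp add: T_def U_def)
  qed
  have b1: "(s - x) ^ p = (\<Sum>i\<le>p. T i)"
    using binomial_ring[of s "- x" p] unfolding T_def by simp
  have "{..p} = insert 0 {1..p}" by auto
  hence b2: "(\<Sum>i\<le>p. T i) = T 0 + (\<Sum>i=1..p. T i)" by simp
  have b3: "T 0 = - (x ^ p)" using op by (simp add: T_def power_minus_odd)
  have b4: "(\<Sum>i=1..p. T i) = s * (\<Sum>i=1..p. U i)"
    by (simp add: sum_distrib_left TU)
  have e1: "x ^ p + (s - x) ^ p = s * (\<Sum>i=1..p. U i)" using b1 b2 b3 b4 by simp
  have "(\<Sum>i=1..p. U i) = U 1 + (\<Sum>i=2..p. U i)"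
    using p3 by (subst sum.atLeast_Suc_atMost) (auto simp: numeral_2_eq_2)
  moreover have "U 1 = int p * x ^ (p - 1)"
    using op p3 by (simp add: U_def)
  ultimately have e2: "(\<Sum>i=1..p. U i) - int p * x ^ (p - 1) = (\<Sum>i=2..p. U i)" by simp
  have d1: "s dvd (\<Sum>i=2..p. U i)"
  proof (rule dvd_sum)
    fix i assume "i \<in> {2..p}"
    hence "s dvd s ^ (i - 1)" by (intro dvd_power) auto
    thus "s dvd U i" by (simp add: U_def)
  qed
  have d2: "int p ^ 2 dvd (\<Sum>i=2..p. U i)" if ps: "int p dvd s"
  proof (rule dvd_sum)
    fix i assume i: "i \<in> {2..p}"
    show "int p ^ 2 dvd U i"
    proof (cases "i = p")
      case True
      have "s ^ 2 dvd s ^ (i - 1)" using True p3 by (intro le_imp_power_dvd) auto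
      moreover have "int p ^ 2 dvd s ^ 2" using ps by (rule dvd_power_same)
      ultimately have "int p ^ 2 dvd s ^ (i - 1)" by (meson dvd_trans)
      moreover have "U i = s ^ (i - 1)" using True by (simp add: U_def)
      ultimately show ?thesis by simp
    next
      case False
      hence "p dvd (p choose i)" using i pp by (intro dvd_choose_prime) auto
      hence a1: "int p dvd of_nat (p choose i)" by simp
      have "s dvd s ^ (i - 1)" using i by (intro dvd_power) auto
      hence a2: "int p dvd s ^ (i - 1)" using ps dvd_trans by blast
      have "int p * int p dvd of_nat (p choose i) * s ^ (i - 1)" using a1 a2 by (rule mult_dvd_mono)
      thus ?thesis by (simp add: U_def power2_eq_square)
    qed
  qed
  have "(\<Sum>i=2..p. U i) = U p + (\<Sum>i\<in>{2..p} - {p}. U i)"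
    using p3 by (intro sum.remove) auto
  moreover have "U p = s ^ (p - 1)" by (simp add: U_def)
  ultimately have e3: "(\<Sum>i=1..p. U i) - s ^ (p - 1) = int p * x ^ (p - 1) + (\<Sum>i\<in>{2..p} - {p}. U i)"
    using e2 by simp
  have d3: "int p dvd (\<Sum>i\<in>{2..p} - {p}. U i)"
  proof (rule dvd_sum)
    fix i assume i: "i \<in> {2..p} - {p}"
    hence "p dvd (p choose i)" using pp by (intro dvd_choose_prime) auto
    hence "int p dvd of_nat (p choose i)" by simp
    thus "int p dvd U i" by (simp add: U_def)
  qed
  have d4: "int p dvd ((\<Sum>i=1..p. U i) - s ^ (p - 1))" unfolding e3 using d3 by simp
  show ?thesis using e1 e2 d1 d2 d4 by (intro exI[of _ "\<Sum>i=1..p. U i"]) simp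
qed

lemma dvd_cancel_diff: fixes r A B :: int shows "r dvd A \<Longrightarrow> r dvd A - B \<Longrightarrow> r dvd B"
  using dvd_diff[of r A "A - B"] by simp
lemma dvd_sum_left: fixes r a b :: int shows "r dvd a + b \<Longrightarrow> r dvd b \<Longrightarrow> r dvd a"
  using dvd_diff[of r "a + b" b] by simp
lemma dvd_sum_right: fixes r a b :: int shows "r dvd a + b \<Longrightarrow> r dvd a \<Longrightarrow> r dvd b"
  using dvd_diff[of r "a + b" a] by simp

lemma coprime_by_primes:
  fixes a b :: int
  assumes "\<And>r. prime r \<Longrightarrow> r dvd a \<Longrightarrow> r dvd b \<Longrightarrow> False"
  shows "coprime a b"
proof (rule ccontr)
  assume "\<not> coprime a b"
  then obtain c where c: "c dvd a" "c dvd b" "\<not> is_unit c" by (rule not_coprimeE)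
  hence "\<bar>c\<bar> \<noteq> 1" by auto
  then obtain r where r: "prime r" "r dvd c" by (rule prime_factor_int)
  show False using assms[OF r(1)] r c dvd_trans by blast
qed

lemma prime_int_dvd_p: "prime (r::int) \<Longrightarrow> prime p \<Longrightarrow> r dvd int p \<Longrightarrow> r = int p"
  using primes_dvd_imp_eq[of r "int p"] by simp

lemma nd_cop: "prime p \<Longrightarrow> coprime a (b::int) \<Longrightarrow> int p dvd b \<Longrightarrow> \<not> int p dvd a"
proof
  assume pp: "prime p" and c: "coprime a b" and "int p dvd b" "int p dvd a"
  hence "\<bar>int p\<bar> = 1" using coprime_common_divisor_int c by blast
  thus False using pp by (simp add: prime_gt_1_nat)
qed

lemma case_nd:
  fixes a b c :: int and p :: nat
  assumes pp: "prime p" and p3: "p > 3" and e: "a ^ p + b ^ p + c ^ p = 0"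
    and pb: "int p dvd b" and cop: "coprime a b"
  shows "\<exists>t. a + b = t ^ p"
proof -
  have op: "odd p" using pp p3 prime_odd_nat by auto
  obtain Q where Q: "a ^ p + ((a + b) - a) ^ p = (a + b) * Q" "(a + b) dvd (Q - int p * a ^ (p - 1))"
    using binom_Q[OF pp op, of a "a + b"] p3 by auto
  have pa: "\<not> int p dvd a" by (rule nd_cop[OF pp cop pb])
  have eq: "(a + b) * Q = (- c) ^ p" using Q(1) e op by (simp add: power_minus_odd)
  have "coprime (a + b) Q"
  proof (rule coprime_by_primes)
    fix r :: int assume r: "prime r" "r dvd a + b" "r dvd Q"
    have "r dvd Q - int p * a ^ (p - 1)" using r(2) Q(2) dvd_trans by blast
    hence "r dvd int p * a ^ (p - 1)" using dvd_cancel_diff[OF r(3)] by blast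
    hence "r dvd int p \<or> r dvd a" using r(1) prime_dvd_mult_iff prime_dvd_power by blast
    thus False
    proof
      assume "r dvd int p"
      hence "r = int p" using prime_int_dvd_p r(1) pp by blast
      hence "int p dvd a" using r(2) pb dvd_sum_left by blast
      thus False using pa by simp
    next
      assume ra: "r dvd a"
      hence "r dvd b" using r(2) dvd_sum_right by blast
      hence "\<bar>r\<bar> = 1" using coprime_common_divisor_int cop ra by blast
      thus False using r(1) by (auto simp: prime_int_iff)
    qed
  qed
  thus ?thesis using pth_power eq op by blast
qed

lemma case_d:
  fixes a b c :: int and p :: nat
  assumes pp: "prime p" and p3: "p > 3" and e: "a ^ p + b ^ p + c ^ p = 0"
    and pc: "int p dvd c" and cop: "coprime a b" and cop2: "coprime a c"
  shows "\<exists>t. int p * (a + b) = t ^ p"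
proof -
  have op: "odd p" using pp p3 prime_odd_nat by auto
  obtain Q where Q: "a ^ p + ((a + b) - a) ^ p = (a + b) * Q" "(a + b) dvd (Q - int p * a ^ (p - 1))"
    "int p dvd (a + b) \<longrightarrow> int p ^ 2 dvd (Q - int p * a ^ (p - 1))"
    "int p dvd (Q - (a + b) ^ (p - 1))"
    using binom_Q[OF pp op, of a "a + b"] p3 by auto
  have pa: "\<not> int p dvd a" by (rule nd_cop[OF pp cop2 pc])
  have pip: "prime (int p)" using pp by simp
  have eq: "(a + b) * Q = (- c) ^ p" using Q(1) e op by (simp add: power_minus_odd)
  have "int p dvd (- c) ^ p" using dvd_trans[OF _ dvd_power[of p "- c"]] pc p3 by auto
  hence "int p dvd (a + b) * Q" using eq by simp
  hence "int p dvd (a + b) \<or> int p dvd Q" using prime_dvd_mult_iff[OF pip] by blast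
  hence ps: "int p dvd (a + b)"
  proof
    assume "int p dvd Q"
    hence "int p dvd (a + b) ^ (p - 1)" using dvd_cancel_diff[OF _ Q(4)] by blast
    thus ?thesis using pip prime_dvd_power by blast
  qed
  have Q2: "int p ^ 2 dvd (Q - int p * a ^ (p - 1))" using Q(3) ps by blast
  hence "int p dvd (Q - int p * a ^ (p - 1))" using dvd_trans[of "int p" "int p ^ 2"] by (simp add: power2_eq_square)
  hence "int p dvd (Q - int p * a ^ (p - 1)) + int p * a ^ (p - 1)" by (intro dvd_add) auto
  hence "int p dvd Q" by simp
  then obtain Q' where Q': "Q = int p * Q'" by blast
  have pQ': "\<not> int p dvd Q'"
  proof
    assume "int p dvd Q'"
    hence "int p ^ 2 dvd Q" using Q' by (simp add: power2_eq_square)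
    hence "int p ^ 2 dvd int p * a ^ (p - 1)" using dvd_cancel_diff[OF _ Q2] by blast
    hence "int p dvd a ^ (p - 1)" using p3 by (simp add: power2_eq_square)
    hence "int p dvd a" using pip prime_dvd_power by blast
    thus False using pa by simp
  qed
  have "coprime (int p * (a + b)) Q'"
  proof (rule coprime_by_primes)
    fix r :: int assume r: "prime r" "r dvd int p * (a + b)" "r dvd Q'"
    have rQ: "r dvd Q" using r(3) Q' by simp
    have "r dvd int p \<or> r dvd a + b" using r(1,2) prime_dvd_mult_iff by blast
    thus False
    proof
      assume "r dvd int p"
      hence "r = int p" using prime_int_dvd_p r(1) pp by blast
      thus False using r(3) pQ' by simp
    next
      assume rs: "r dvd a + b"
      have "r dvd Q - int p * a ^ (p - 1)" using rs Q(2) dvd_trans by blast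
      hence "r dvd int p * a ^ (p - 1)" using dvd_cancel_diff[OF rQ] by blast
      hence "r dvd int p \<or> r dvd a" using r(1) prime_dvd_mult_iff prime_dvd_power by blast
      thus False
      proof
        assume "r dvd int p"
        hence "r = int p" using prime_int_dvd_p r(1) pp by blast
        thus False using r(3) pQ' by simp
      next
        assume ra: "r dvd a"
        hence "r dvd b" using rs dvd_sum_right by blast
        hence "\<bar>r\<bar> = 1" using coprime_common_divisor_int cop ra by blast
        thus False using r(1) by (auto simp: prime_int_iff)
      qed
    qed
  qed
  moreover have "(int p * (a + b)) * Q' = (- c) ^ p" using eq Q' by (simp add: algebra_simps)
  ultimately show ?thesis using pth_power op by blast
qed

locale ctx =
  fixes p q :: nat and P :: "complex set"
  assumes pp: "prime p" and p3: "p > 3" and PI: "primeideal P (ZK_ring p)"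
    and qP: "of_nat q \<in> P" and qq: "prime q" and qp: "q \<noteq> p"

sublocale ctx \<subseteq> I: primeideal P "ZK_ring p" by (rule PI)

context ctx begin

lemma p0: "p > 0" using p3 by simp

lemma zk_mult: "a \<in> ZK p \<Longrightarrow> b \<in> ZK p \<Longrightarrow> a * b \<in> ZK p"
  using I.m_closed[of a b] by (simp add: ZK_ring_def)
lemma zk_add: "a \<in> ZK p \<Longrightarrow> b \<in> ZK p \<Longrightarrow> a + b \<in> ZK p"
  using I.add.m_closed[of a b] by (simp add: ZK_ring_def)
lemma zk_1: "1 \<in> ZK p" using I.one_closed by (simp add: ZK_ring_def)
lemma zk_0: "0 \<in> ZK p" using I.zero_closed by (simp add: ZK_ring_def)
lemma ainv: "a \<in> ZK p \<Longrightarrow> \<ominus>\<^bsub>ZK_ring p\<^esub> a = - a"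
proof -
  assume a: "a \<in> ZK p"
  hence "a \<oplus>\<^bsub>ZK_ring p\<^esub> \<ominus>\<^bsub>ZK_ring p\<^esub> a = \<zero>\<^bsub>ZK_ring p\<^esub>"
    by (intro I.r_neg) (simp add: ZK_ring_def)
  thus ?thesis by (simp add: ZK_ring_def add_eq_0_iff2 add.commute) (metis minus_minus)
qed
lemma zk_neg: "a \<in> ZK p \<Longrightarrow> - a \<in> ZK p"
  using I.a_inv_closed[of a] ainv[of a] by (simp add: ZK_ring_def)
lemma zk_diff: "a \<in> ZK p \<Longrightarrow> b \<in> ZK p \<Longrightarrow> a - b \<in> ZK p"
  using zk_add[of a "-b"] zk_neg[of b] by simp
lemma zk_pow: "a \<in> ZK p \<Longrightarrow> a ^ n \<in> ZK p"
  by (induction n) (auto intro: zk_mult zk_1)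
lemma zk_nat: "of_nat n \<in> ZK p"
  by (induction n) (auto intro: zk_add zk_1 zk_0)
lemma zk_int: "of_int n \<in> ZK p"
  by (cases n rule: int_cases) (auto intro: zk_nat zk_neg simp del: of_nat_Suc)
lemma zk_sum: "(\<And>i. i \<in> S \<Longrightarrow> f i \<in> ZK p) \<Longrightarrow> sum f S \<in> ZK p"
  by (induction S rule: infinite_finite_induct) (auto intro: zk_add zk_0)
lemma zk_zeta: "zeta p ^ n \<in> ZK p"
  using zeta_alg[OF p0] by (rule zk_pow)

lemma P_zk: "a \<in> P \<Longrightarrow> a \<in> ZK p"
  using I.a_subset by (auto simp: ZK_ring_def)
lemma P_add: "a \<in> P \<Longrightarrow> b \<in> P \<Longrightarrow> a + b \<in> P"
  using additive_subgroup.a_closed[OF I.is_additive_subgroup, of a b] by (simp add: ZK_ring_def)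
lemma P_0: "0 \<in> P"
  using additive_subgroup.zero_closed[OF I.is_additive_subgroup] by (simp add: ZK_ring_def)
lemma P_neg: "a \<in> P \<Longrightarrow> - a \<in> P"
  using additive_subgroup.a_inv_closed[OF I.is_additive_subgroup, of a] ainv[of a] P_zk[of a] by simp
lemma P_diff: "a \<in> P \<Longrightarrow> b \<in> P \<Longrightarrow> a - b \<in> P"
  using P_add[of a "-b"] P_neg[of b] by simp
lemma P_multl: "a \<in> P \<Longrightarrow> x \<in> ZK p \<Longrightarrow> x * a \<in> P"
  using I.I_l_closed[of a x] by (simp add: ZK_ring_def)
lemma P_multr: "a \<in> P \<Longrightarrow> x \<in> ZK p \<Longrightarrow> a * x \<in> P"
  using P_multl[of a x] by (simp add: mult.commute)
lemma P_prime: "a \<in> ZK p \<Longrightarrow> b \<in> ZK p \<Longrightarrow> a * b \<in> P \<Longrightarrow> a \<in> P \<or> b \<in> P"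
  using I.I_prime[of a b] by (simp add: ZK_ring_def)
lemma P_1: "1 \<notin> P"
proof
  assume "1 \<in> P"
  hence "\<And>x. x \<in> ZK p \<Longrightarrow> x \<in> P" using P_multl[of 1] by force
  hence "carrier (ZK_ring p) = P" using P_zk by (auto simp: ZK_ring_def)
  thus False using I.I_notcarr by simp
qed
lemma P_sum: "(\<And>i. i \<in> S \<Longrightarrow> f i \<in> P) \<Longrightarrow> sum f S \<in> P"
  by (induction S rule: infinite_finite_induct) (auto intro: P_add P_0)
lemma zk_prod: "(\<And>i. i \<in> S \<Longrightarrow> f i \<in> ZK p) \<Longrightarrow> prod f S \<in> ZK p"
proof (induction S rule: infinite_finite_induct)
  case (insert x F) thus ?case using zk_mult by simp
qed (use zk_1 in simp_all)
lemma P_prod: "finite S \<Longrightarrow> (\<And>i. i \<in> S \<Longrightarrow> f i \<in> ZK p) \<Longrightarrow> prod f S \<in> P \<Longrightarrow> \<exists>i\<in>S. f i \<in> P"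
proof (induction S rule: finite_induct)
  case empty thus ?case using P_1 by simp
next
  case (insert x F)
  have "prod f F \<in> ZK p" using insert.prems(1) zk_prod[of F f] by blast
  moreover have "f x * prod f F \<in> P" using insert by simp
  ultimately have "f x \<in> P \<or> prod f F \<in> P" using P_prime[of "f x" "prod f F"] insert.prems(1) by blast
  thus ?case using insert by blast
qed
lemma P_pow: "a \<in> ZK p \<Longrightarrow> a ^ n \<in> P \<Longrightarrow> a \<in> P"
proof (induction n)
  case 0 thus ?case using P_1 by simp
next
  case (Suc n)
  have "a * a ^ n \<in> P" using Suc.prems by simp
  hence "a \<in> P \<or> a ^ n \<in> P" using P_prime[of a "a ^ n"] Suc.prems(1) zk_pow by blast
  thus ?case using Suc.IH Suc.prems(1) by blast
qed
lemma P_powdiff: "a \<in> ZK p \<Longrightarrow> b \<in> ZK p \<Longrightarrow> a - b \<in> P \<Longrightarrow> a ^ n - b ^ n \<in> P"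
proof (induction n)
  case 0 thus ?case using P_0 by simp
next
  case (Suc n)
  have "a ^ Suc n - b ^ Suc n = a * (a ^ n - b ^ n) + b ^ n * (a - b)" by (simp add: algebra_simps)
  moreover have "a ^ n - b ^ n \<in> P" using Suc.IH Suc.prems by blast
  hence "a * (a ^ n - b ^ n) \<in> P" using P_multl Suc.prems(1) by blast
  moreover have "b ^ n * (a - b) \<in> P" using P_multl[of "a - b" "b ^ n"] zk_pow Suc.prems by blast
  ultimately show ?case using P_add by simp
qed

lemma int_notP: "coprime n (int q) \<Longrightarrow> of_int n \<notin> P"
proof
  assume c: "coprime n (int q)" and n: "of_int n \<in> P"
  obtain u v where "u * n + v * int q = gcd n (int q)" using bezout_int by blast
  hence "u * n + v * int q = 1" using c by simp
  hence "(of_int (u * n + v * int q) :: complex) = 1" by simp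
  hence e: "of_int u * of_int n + of_int v * of_nat q = (1::complex)" by simp
  have "of_int u * of_int n \<in> P" using P_multl[OF n zk_int] .
  moreover have "of_int v * of_nat q \<in> P" using P_multl[OF qP zk_int] .
  ultimately have "of_int u * of_int n + of_int v * of_nat q \<in> P" by (rule P_add)
  thus False using P_1 e by simp
qed
lemma p_notP: "of_nat p \<notin> P"
proof -
  have "coprime p q" using pp qq qp primes_coprime by blast
  hence "coprime (int p) (int q)" by simp
  from int_notP[OF this] show ?thesis by simp
qed


lemma zeta_dvd: "p dvd m \<Longrightarrow> zeta p ^ m = 1"
  using zeta_pow_mod[OF p0, of m] by simp

lemma P_powpos: "a \<in> P \<Longrightarrow> n > 0 \<Longrightarrow> a ^ n \<in> P"
proof -
  assume a: "a \<in> P" and n: "n > 0"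
  have "a ^ n = a * a ^ (n - 1)" using n by (simp add: power_eq_if)
  thus ?thesis using P_multr[OF a zk_pow[OF P_zk[OF a]]] by simp
qed

lemma zeta_notP: "zeta p ^ a \<notin> P"
proof
  assume "zeta p ^ a \<in> P"
  hence "(zeta p ^ a) ^ p \<in> P" using P_powpos p0 by blast
  moreover have "(zeta p ^ a) ^ p = 1"
    by (simp add: power_mult[symmetric] mult.commute[of a p] power_mult zeta_pow_p[OF p0])
  ultimately show False using P_1 by simp
qed

lemma one_zeta_notP: "1 - zeta p \<notin> P"
proof
  assume h: "1 - zeta p \<in> P"
  have "1 - zeta p ^ j \<in> P" for j
  proof -
    have "1 - zeta p ^ j = (1 - zeta p) * (\<Sum>i<j. zeta p ^ i)" by (rule one_diff_power_eq)
    thus ?thesis using P_multr[OF h zk_sum[OF zk_zeta]] by simp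
  qed
  hence "(\<Sum>j<p. 1 - zeta p ^ j) \<in> P" by (intro P_sum)
  moreover have "(\<Sum>j<p. 1 - zeta p ^ j) = of_nat p - (\<Sum>j<p. zeta p ^ j)"
    by (simp add: sum_subtractf)
  ultimately show False using zeta_sum[of p] p3 p_notP by simp
qed

lemma one_zeta_pow_notP: "\<not> p dvd m \<Longrightarrow> 1 - zeta p ^ m \<notin> P"
proof
  assume nd: "\<not> p dvd m" and h: "1 - zeta p ^ m \<in> P"
  have "coprime m p" using prime_imp_coprime[OF pp nd] by (simp add: ac_simps)
  then obtain x where x: "[m * x = Suc 0] (mod p)" using cong_solve_coprime_nat by blast
  hence "(m * x) mod p = 1" using p3 by (simp add: cong_def)
  hence zx: "(zeta p ^ m) ^ x = zeta p" using zeta_pow_mod[OF p0, of "m * x"] by (simp add: power_mult)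
  have "1 - (zeta p ^ m) ^ x = (1 - zeta p ^ m) * (\<Sum>i<x. (zeta p ^ m) ^ i)" by (rule one_diff_power_eq)
  hence "1 - (zeta p ^ m) ^ x \<in> P" using P_multr[OF h zk_sum[OF zk_pow[OF zk_zeta]]] by simp
  thus False using zx one_zeta_notP by simp
qed

lemma zeta_inj_le: "a \<le> b \<Longrightarrow> zeta p ^ b - zeta p ^ a \<in> P \<Longrightarrow> zeta p ^ a = zeta p ^ b"
proof -
  assume ab: "a \<le> b" and h: "zeta p ^ b - zeta p ^ a \<in> P"
  have "zeta p ^ b = zeta p ^ a * zeta p ^ (b - a)" using ab by (simp add: power_add[symmetric])
  hence "zeta p ^ b - zeta p ^ a = zeta p ^ a * (zeta p ^ (b - a) - 1)" by (simp add: algebra_simps)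
  hence "zeta p ^ a * (zeta p ^ (b - a) - 1) \<in> P" using h by simp
  hence "zeta p ^ (b - a) - 1 \<in> P" using P_prime zk_zeta zeta_notP zk_diff zk_1 by blast
  hence "1 - zeta p ^ (b - a) \<in> P" using P_neg by fastforce
  hence "p dvd (b - a)" using one_zeta_pow_notP by blast
  hence "zeta p ^ (b - a) = 1" by (rule zeta_dvd)
  thus ?thesis using \<open>zeta p ^ b = zeta p ^ a * zeta p ^ (b - a)\<close> by simp
qed

lemma zeta_inj: "zeta p ^ a - zeta p ^ b \<in> P \<Longrightarrow> zeta p ^ a = zeta p ^ b"
proof (cases "a \<le> b")
  case True
  assume h: "zeta p ^ a - zeta p ^ b \<in> P"
  hence "zeta p ^ b - zeta p ^ a \<in> P" using P_neg by fastforce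
  thus ?thesis using zeta_inj_le True by blast
next
  case False
  assume h: "zeta p ^ a - zeta p ^ b \<in> P"
  thus ?thesis using zeta_inj_le[of b a] False by simp
qed


lemma coset_eq: "P +>\<^bsub>ZK_ring p\<^esub> a = (\<lambda>h. h + a) ` P"
  by (auto simp: a_r_coset_def r_coset_def ZK_ring_def)

lemma coset_diff: "P +>\<^bsub>ZK_ring p\<^esub> b = P +>\<^bsub>ZK_ring p\<^esub> c \<Longrightarrow> b - c \<in> P"
proof -
  assume h: "P +>\<^bsub>ZK_ring p\<^esub> b = P +>\<^bsub>ZK_ring p\<^esub> c"
  have "b \<in> (\<lambda>h. h + b) ` P" using P_0 by force
  hence "b \<in> (\<lambda>h. h + c) ` P" using h coset_eq by simp
  then obtain h' where "h' \<in> P" "b = h' + c" by auto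
  thus ?thesis by simp
qed

lemma zk_natpow: "a [^]\<^bsub>ZK_ring p\<^esub> (n::nat) = a ^ n"
  by (induction n) (simp_all add: ZK_ring_def)

definition "NP = ideal_norm p P"
definition "ee = (NP - 1) div p"

lemma fermat:
  assumes fin: "finite (carrier (ZK_ring p Quot P))" and a: "a \<in> ZK p" "a \<notin> P"
  shows "a ^ (NP - 1) - 1 \<in> P"
proof -
  let ?Q = "ZK_ring p Quot P"
  let ?h = "(+>\<^bsub>ZK_ring p\<^esub>) P"
  have hom: "?h \<in> ring_hom (ZK_ring p) ?Q" by (rule I.rcos_ring_hom)
  have ac: "a \<in> carrier (ZK_ring p)" using a by (simp add: ZK_ring_def)
  have hpow: "?h (a [^]\<^bsub>ZK_ring p\<^esub> n) = ?h a [^]\<^bsub>?Q\<^esub> n" for n :: nat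
  proof (induction n)
    case 0 thus ?case using ring_hom_one[OF hom] by simp
  next
    case (Suc n)
    have "?h (a [^]\<^bsub>ZK_ring p\<^esub> Suc n) = ?h (a [^]\<^bsub>ZK_ring p\<^esub> n \<otimes>\<^bsub>ZK_ring p\<^esub> a)" by simp
    also have "\<dots> = ?h (a [^]\<^bsub>ZK_ring p\<^esub> n) \<otimes>\<^bsub>?Q\<^esub> ?h a"
      by (rule ring_hom_mult[OF hom]) (use ac I.nat_pow_closed in auto)
    finally show ?case using Suc by simp
  qed
  have hac: "?h a \<in> carrier ?Q" by (rule ring_hom_closed[OF hom ac])
  have hnz: "?h a \<noteq> \<zero>\<^bsub>?Q\<^esub>"
  proof
    assume "?h a = \<zero>\<^bsub>?Q\<^esub>"
    hence "?h a = ?h 0" using I.a_rcos_const[OF P_0] by (simp add: FactRing_def ZK_ring_def)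
    hence "a - 0 \<in> P" by (rule coset_diff)
    thus False using a by simp
  qed
  have "?h a [^]\<^bsub>?Q\<^esub> (card (carrier ?Q) - 1) = \<one>\<^bsub>?Q\<^esub>"
    by (rule finite_domain_fermat[OF I.quotient_is_domain fin hac hnz])
  hence "?h (a [^]\<^bsub>ZK_ring p\<^esub> (NP - 1)) = ?h \<one>\<^bsub>ZK_ring p\<^esub>"
    using hpow[of "NP - 1"] ring_hom_one[OF hom] by (simp add: NP_def ideal_norm_def)
  hence "?h (a ^ (NP - 1)) = ?h 1" by (simp only: zk_natpow) (simp add: ZK_ring_def)
  thus ?thesis by (rule coset_diff)
qed

lemma p_dvd_N: "finite (carrier (ZK_ring p Quot P)) \<Longrightarrow> p dvd (NP - 1)"
proof -
  assume fin: "finite (carrier (ZK_ring p Quot P))"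
  have "zeta p ^ 1 \<notin> P" by (rule zeta_notP)
  hence "zeta p ^ (NP - 1) - 1 \<in> P" using fermat[OF fin zk_zeta[of 1]] by simp
  hence "1 - zeta p ^ (NP - 1) \<in> P" using P_neg by fastforce
  thus ?thesis using one_zeta_pow_notP by blast
qed


lemma unity_zeta: "z ^ p = (1::complex) \<Longrightarrow> \<exists>k. z = zeta p ^ k"
proof -
  assume "z ^ p = 1"
  hence "z \<in> (\<lambda>k. cis (2 * pi * real k / real p)) ` {..<p}"
    using bij_betw_roots_unity[OF p0] by (auto simp: bij_betw_def)
  then obtain k where "z = cis (2 * pi * real k / real p)" by auto
  moreover have "cis (2 * pi * real k / real p) = zeta p ^ k"
    unfolding zeta_def DeMoivre by (simp add: field_simps)
  ultimately show ?thesis by blast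
qed

lemma roots:
  assumes B: "B \<in> ZK p" and h: "B ^ p - 1 \<in> P"
  shows "\<exists>\<mu>. B - zeta p ^ \<mu> \<in> P"
proof -
  define f :: "complex poly" where "f = Polynomial.monom 1 p - 1"
  have deg: "degree f = p" unfolding f_def using p0
    by (simp only: diff_conv_add_uminus, subst degree_add_eq_left) (auto simp: degree_monom_eq)
  have lc: "lead_coeff f = 1" using deg p0 by (simp add: f_def coeff_monom)
  have pf: "poly f z = z ^ p - 1" for z by (simp add: f_def poly_monom)
  let ?S = "{z. poly f z = 0}"
  have S: "?S = {z. z ^ p = 1}" by (simp add: pf)
  have fin: "finite ?S" unfolding S using card_roots_unity_eq[OF p0] p0
    by (metis card.infinite not_gr0)
  have dec: "Polynomial.smult (lead_coeff f) (\<Prod>z\<in>?S. [:-z, 1:] ^ Polynomial.order z f) = f"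
    by (rule complex_poly_decompose)
  hence "poly f B = poly (Polynomial.smult (lead_coeff f) (\<Prod>z\<in>?S. [:-z, 1:] ^ Polynomial.order z f)) B"
    by simp
  also have "\<dots> = (\<Prod>z\<in>?S. (B - z) ^ Polynomial.order z f)"
    using lc by (simp add: poly_prod)
  finally have "poly f B = (\<Prod>z\<in>?S. (B - z) ^ Polynomial.order z f)" .
  hence "(\<Prod>z\<in>?S. (B - z) ^ Polynomial.order z f) \<in> P" using h pf by simp
  moreover have zz: "\<And>z. z \<in> ?S \<Longrightarrow> B - z \<in> ZK p"
  proof -
    fix z assume "z \<in> ?S"
    then obtain k where k: "z = zeta p ^ k" using S unity_zeta by auto
    show "B - z \<in> ZK p" unfolding k by (rule zk_diff[OF B zk_zeta])
  qed
  hence "\<And>z. z \<in> ?S \<Longrightarrow> (B - z) ^ Polynomial.order z f \<in> ZK p" by (rule zk_pow)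
  ultimately have "\<exists>z\<in>?S. (B - z) ^ Polynomial.order z f \<in> P" by (rule P_prod[OF fin, rotated])
  then obtain z where z: "z \<in> ?S" "(B - z) ^ Polynomial.order z f \<in> P" by blast
  then obtain k where k: "z = zeta p ^ k" using S unity_zeta by auto
  have "B - z \<in> P" by (rule P_pow[OF zz[OF z(1)] z(2)])
  thus ?thesis using k by blast
qed


lemma ex_root:
  assumes a: "a \<in> ZK p" "a \<notin> P"
  shows "\<exists>\<mu>. a ^ ee - zeta p ^ \<mu> \<in> P"
proof (cases "finite (carrier (ZK_ring p Quot P))")
  case True
  have f: "a ^ (NP - 1) - 1 \<in> P" by (rule fermat[OF True a])
  obtain m where m: "NP - 1 = p * m" using p_dvd_N[OF True] by blast
  have "ee = m" using m p0 by (simp add: ee_def)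
  hence "(a ^ ee) ^ p - 1 \<in> P" using f m by (simp add: power_mult[symmetric] mult.commute)
  thus ?thesis by (rule roots[OF zk_pow[OF a(1)]])
next
  case False
  hence "NP = 0" by (simp add: NP_def ideal_norm_def)
  hence "ee = 0" by (simp add: ee_def)
  thus ?thesis using P_0 by (intro exI[of _ 0]) simp
qed

lemma pres_eq:
  assumes a: "a \<in> ZK p" and h: "a ^ ee - zeta p ^ \<mu> \<in> P"
  shows "pres p P a = zeta p ^ \<mu>"
  unfolding pres_def
proof (rule the_equality)
  show "(\<exists>\<mu>'. zeta p ^ \<mu> = zeta p ^ \<mu>') \<and> a ^ ((ideal_norm p P - 1) div p) - zeta p ^ \<mu> \<in> P"
    using h by (auto simp: ee_def NP_def)
next
  fix w assume w: "(\<exists>\<mu>'. w = zeta p ^ \<mu>') \<and> a ^ ((ideal_norm p P - 1) div p) - w \<in> P"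
  then obtain \<nu> where nu: "w = zeta p ^ \<nu>" by blast
  have "a ^ ee - zeta p ^ \<nu> \<in> P" using w nu by (simp add: ee_def NP_def)
  hence "(a ^ ee - zeta p ^ \<nu>) - (a ^ ee - zeta p ^ \<mu>) \<in> P" using h by (rule P_diff)
  hence "zeta p ^ \<mu> - zeta p ^ \<nu> \<in> P" by simp
  thus "w = zeta p ^ \<mu>" using zeta_inj nu by metis
qed

lemma pres_ex:
  assumes a: "a \<in> ZK p" "a \<notin> P"
  shows "\<exists>\<mu>. pres p P a = zeta p ^ \<mu> \<and> a ^ ee - zeta p ^ \<mu> \<in> P"
  using ex_root[OF a] pres_eq[OF a(1)] by blast

lemma notP_mult: "a \<in> ZK p \<Longrightarrow> b \<in> ZK p \<Longrightarrow> a \<notin> P \<Longrightarrow> b \<notin> P \<Longrightarrow> a * b \<notin> P"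
  using P_prime by blast

lemma pres_mult:
  assumes a: "a \<in> ZK p" "a \<notin> P" and b: "b \<in> ZK p" "b \<notin> P"
  shows "pres p P (a * b) = pres p P a * pres p P b"
proof -
  obtain m where m: "pres p P a = zeta p ^ m" "a ^ ee - zeta p ^ m \<in> P" using pres_ex[OF a] by blast
  obtain n where n: "pres p P b = zeta p ^ n" "b ^ ee - zeta p ^ n \<in> P" using pres_ex[OF b] by blast
  have "(a * b) ^ ee - zeta p ^ (m + n) = a ^ ee * (b ^ ee - zeta p ^ n) + zeta p ^ n * (a ^ ee - zeta p ^ m)"
    by (simp add: algebra_simps power_mult_distrib power_add)
  moreover have "a ^ ee * (b ^ ee - zeta p ^ n) \<in> P" by (rule P_multl[OF n(2) zk_pow[OF a(1)]])
  moreover have "zeta p ^ n * (a ^ ee - zeta p ^ m) \<in> P" by (rule P_multl[OF m(2) zk_zeta])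
  ultimately have "(a * b) ^ ee - zeta p ^ (m + n) \<in> P" using P_add by simp
  hence "pres p P (a * b) = zeta p ^ (m + n)" by (rule pres_eq[OF zk_mult[OF a(1) b(1)]])
  thus ?thesis using m n by (simp add: power_add)
qed

lemma pres_cong:
  assumes a: "a \<in> ZK p" "a \<notin> P" and b: "b \<in> ZK p" and ab: "a - b \<in> P"
  shows "pres p P a = pres p P b"
proof -
  obtain m where m: "pres p P a = zeta p ^ m" "a ^ ee - zeta p ^ m \<in> P" using pres_ex[OF a] by blast
  have "b ^ ee - a ^ ee \<in> P" using P_powdiff[OF b a(1)] P_neg[OF ab] by simp
  hence "(b ^ ee - a ^ ee) + (a ^ ee - zeta p ^ m) \<in> P" using m(2) by (rule P_add)
  hence "pres p P b = zeta p ^ m" by (intro pres_eq[OF b]) simp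
  thus ?thesis using m by simp
qed

lemma pres_pow_p:
  assumes a: "a \<in> ZK p" "a \<notin> P"
  shows "pres p P (a ^ p) = 1"
proof -
  obtain m where m: "pres p P a = zeta p ^ m" "a ^ ee - zeta p ^ m \<in> P" using pres_ex[OF a] by blast
  have "(a ^ ee) ^ p - (zeta p ^ m) ^ p \<in> P" by (rule P_powdiff[OF zk_pow[OF a(1)] zk_zeta m(2)])
  moreover have "(zeta p ^ m) ^ p = zeta p ^ 0"
    by (simp add: power_mult[symmetric] mult.commute[of m p] power_mult zeta_pow_p[OF p0])
  ultimately have "(a ^ p) ^ ee - zeta p ^ 0 \<in> P" by (simp add: power_mult[symmetric] mult.commute)
  hence "pres p P (a ^ p) = zeta p ^ 0" by (rule pres_eq[OF zk_pow[OF a(1)]])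
  thus ?thesis by simp
qed


lemma coprime_notP: "coprime m n \<Longrightarrow> of_int m \<in> P \<Longrightarrow> of_int n \<notin> P"
proof
  assume c: "coprime m n" and m: "of_int m \<in> P" and n: "of_int n \<in> P"
  obtain u v where "u * m + v * n = gcd m n" using bezout_int by blast
  hence "u * m + v * n = 1" using c by simp
  hence "(of_int (u * m + v * n) :: complex) = 1" by simp
  hence e: "of_int u * of_int m + of_int v * of_int n = (1::complex)" by simp
  have "of_int u * of_int m \<in> P" using P_multl[OF m zk_int] .
  moreover have "of_int v * of_int n \<in> P" using P_multl[OF n zk_int] .
  ultimately have "of_int u * of_int m + of_int v * of_int n \<in> P" by (rule P_add)
  thus False using P_1 e by simp
qed

lemma one_plus_pow_notP:
  assumes "\<not> p dvd 2 * m"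
  shows "1 + zeta p ^ m \<notin> P"
proof
  assume h: "1 + zeta p ^ m \<in> P"
  have "(1 - zeta p ^ m) * (1 + zeta p ^ m) = 1 - zeta p ^ (2 * m)"
    by (simp add: algebra_simps power_mult[symmetric] power2_eq_square mult.commute[of 2 m] power_mult)
  moreover have "(1 - zeta p ^ m) * (1 + zeta p ^ m) \<in> P"
    by (rule P_multl[OF h zk_diff[OF zk_1 zk_zeta]])
  ultimately show False using one_zeta_pow_notP[OF assms] by simp
qed

lemma main_case:
  fixes a b :: int
  assumes ab: "of_int a * zeta p - of_int b \<in> P" and cop: "coprime a b"
    and k1: "1 \<le> k" and k2: "k \<le> p - 2"
  shows "of_int a + of_int b \<notin> P"
    and "pres p P (of_int a + zeta p ^ k * of_int b)
         = pres p P (of_int a + of_int b) * (pres p P (zeta_half p k) * pres p P (eps p (k + 1)))"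
proof -
  let ?z = "zeta p"
  have za: "?z \<in> ZK p" using zk_zeta[of 1] by simp
  have aP: "of_int a \<notin> P"
  proof
    assume h: "of_int a \<in> P"
    have "of_int a * ?z - (of_int a * ?z - of_int b) \<in> P"
      by (rule P_diff[OF P_multr[OF h za] ab])
    hence "of_int b \<in> P" by simp
    thus False using coprime_notP[OF cop h] by simp
  qed
  have p2: "\<not> p dvd 2" using p3 by (auto dest: dvd_imp_le)
  have opz: "1 + ?z \<notin> P" using one_plus_pow_notP[of 1] p2 by simp
  have kp: "\<not> p dvd 2 * (k + 1)"
  proof
    assume "p dvd 2 * (k + 1)"
    hence "p dvd k + 1" using pp p2 prime_dvd_mult_nat by blast
    moreover have "k + 1 < p" "0 < k + 1" using k2 p3 by auto
    ultimately show False by (auto dest: dvd_imp_le)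
  qed
  have opk: "1 + ?z ^ (k + 1) \<notin> P" by (rule one_plus_pow_notP[OF kp])
  define c where "c = (if odd (k + 1) then k + 1 else k + 1 + p)"
  have oc: "odd c" using pp p3 prime_odd_nat[of p] by (auto simp: c_def)
  have zc: "?z ^ c = ?z ^ (k + 1)"
    using zeta_pow_p[OF p0] by (simp add: c_def power_add del: power_Suc add_Suc)
  define E where "E = (\<Sum>j<c. (- ?z) ^ j)"
  have EZ: "E \<in> ZK p" unfolding E_def by (intro zk_sum zk_pow zk_neg za)
  have "1 - (- ?z) ^ c = (1 - (- ?z)) * E" unfolding E_def by (rule one_diff_power_eq)
  hence Erel: "(1 + ?z) * E = 1 + ?z ^ (k + 1)" using oc zc by simp
  have EP: "E \<notin> P"
  proof
    assume "E \<in> P"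
    hence "(1 + ?z) * E \<in> P" by (rule P_multl[OF _ zk_add[OF zk_1 za]])
    thus False using Erel opk by simp
  qed
  have nz: "1 + ?z \<noteq> 0" using opz P_0 by auto
  define h where "h = (p + 1) div 2"
  define W where "W = ?z ^ ((p - 1) * (k * h))"
  have Winv: "?z ^ (k * h) * W = 1"
  proof -
    have "?z ^ (k * h) * W = ?z ^ (p * (k * h))"
      unfolding W_def using p0 by (simp add: power_add[symmetric] algebra_simps)
    also have "\<dots> = 1" by (rule zeta_dvd) simp
    finally show ?thesis .
  qed
  have zh: "zeta_half p k = ?z ^ (k * h)" by (simp add: zeta_half_def h_def)
  have "eps p (k + 1) = inverse (?z ^ (k * h)) * E"
  proof -
    have ex: "(1 - int (k + 1)) * int h = - int (k * h)" by simp
    have "eps p (k + 1) = ?z powi (- int (k * h)) * (1 + ?z ^ (k + 1)) / (1 + ?z)"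
      unfolding eps_def h_def[symmetric] ex ..
    also have "\<dots> = inverse (?z ^ (k * h)) * ((1 + ?z ^ (k + 1)) / (1 + ?z))"
      by (simp only: power_int_minus power_int_of_nat times_divide_eq_right)
    also have "(1 + ?z ^ (k + 1)) / (1 + ?z) = E"
      using Erel nz by (metis nonzero_mult_div_cancel_left)
    finally show ?thesis .
  qed
  moreover have "inverse (?z ^ (k * h)) = W" using Winv by (simp add: inverse_unique)
  ultimately have epsW: "eps p (k + 1) = W * E" by simp
  have epsZ: "eps p (k + 1) \<in> ZK p" unfolding epsW W_def by (rule zk_mult[OF zk_zeta EZ])
  have zhZ: "zeta_half p k \<in> ZK p" unfolding zh by (rule zk_zeta)
  have prodE: "zeta_half p k * eps p (k + 1) = E" unfolding zh epsW
    using Winv by (simp add: mult.assoc[symmetric])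
  have zhP: "zeta_half p k \<notin> P" using EP prodE P_multr epsZ by metis
  have epsP: "eps p (k + 1) \<notin> P" using EP prodE P_multl zhZ by metis
  have aZ: "(of_int a :: complex) \<in> ZK p" by (rule zk_int)
  have bZ: "(of_int b :: complex) \<in> ZK p" by (rule zk_int)
  have abZ: "of_int a + of_int b \<in> ZK p" by (rule zk_add[OF aZ bZ])
  show abP: "of_int a + of_int b \<notin> P"
  proof
    assume h1: "of_int a + of_int b \<in> P"
    have "(of_int a + of_int b) + (of_int a * ?z - of_int b) \<in> P" by (rule P_add[OF h1 ab])
    hence "of_int a * (1 + ?z) \<in> P" by (simp add: algebra_simps)
    thus False using P_prime[OF aZ zk_add[OF zk_1 za]] aP opz by blast
  qed
  let ?X = "of_int a + ?z ^ k * of_int b"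
  let ?Y = "(of_int a + of_int b) * E"
  have XZ: "?X \<in> ZK p" by (rule zk_add[OF aZ zk_mult[OF zk_zeta bZ]])
  have YZ: "?Y \<in> ZK p" by (rule zk_mult[OF abZ EZ])
  have YP: "?Y \<notin> P" using P_prime[OF abZ EZ] abP EP by blast
  have "?Y - ?X = E * (of_int b - of_int a * ?z) - ?z ^ k * (of_int b - of_int a * ?z)"
  proof -
    have "?Y - ?X - (E * (of_int b - of_int a * ?z) - ?z ^ k * (of_int b - of_int a * ?z))
        = of_int a * ((1 + ?z) * E - (1 + ?z ^ (k + 1)))"
      by (simp add: algebra_simps)
    also have "\<dots> = 0" using Erel by simp
    finally show ?thesis by simp
  qed
  moreover have "of_int b - of_int a * ?z \<in> P" using P_neg[OF ab] by simp
  ultimately have "?Y - ?X \<in> P"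
    using P_diff P_multl zk_zeta EZ by metis
  hence "pres p P ?Y = pres p P ?X" by (rule pres_cong[OF YZ YP XZ])
  moreover have "pres p P ?Y = pres p P (of_int a + of_int b) * pres p P E"
    by (rule pres_mult[OF abZ abP EZ EP])
  moreover have "pres p P E = pres p P (zeta_half p k) * pres p P (eps p (k + 1))"
    using pres_mult[OF zhZ zhP epsZ epsP] prodE by simp
  ultimately show "pres p P ?X = pres p P (of_int a + of_int b) * (pres p P (zeta_half p k) * pres p P (eps p (k + 1)))"
    by simp
qed

end

theorem lemma3p5:
  fixes p q k :: nat and x y z :: int and P :: "complex set"
  assumes "prime p" and "p > 3"
    and "x \<noteq> 0" and "y \<noteq> 0" and "z \<noteq> 0"
    and "coprime x y" and "coprime y z" and "coprime x z"
    and "x ^ p + y ^ p + z ^ p = 0"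
    and "int p dvd y"
    and "prime q" and "q \<noteq> p"
    and "primeideal P (ZK_ring p)" and "complex_of_nat q \<in> P"
    and "1 \<le> k" and "k \<le> p - 2"
  shows
    "(of_int x * zeta p - of_int y \<in> P \<longrightarrow>
       pres p P (of_int x + zeta p ^ k * of_int y)
         = pres p P (zeta_half p k) * pres p P (eps p (k + 1)))
   \<and> (of_int z * zeta p - of_int y \<in> P \<longrightarrow>
       pres p P (of_int z + zeta p ^ k * of_int y)
         = pres p P (zeta_half p k) * pres p P (eps p (k + 1)))
   \<and> (of_int x * zeta p - of_int z \<in> P \<longrightarrow>
       pres p P (of_int x + zeta p ^ k * of_int z) * pres p P (of_nat p)
         = pres p P (zeta_half p k) * pres p P (eps p (k + 1)))"
proof -
  interpret C: ctx p q P
    unfolding ctx_def using assms by auto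
  have k1: "1 \<le> k" and k2: "k \<le> p - 2" using assms by auto
  have pw: "pres p P (of_int a + of_int b) = 1" if ab: "a + b = t ^ p" and nP: "of_int a + of_int b \<notin> P"
    for a b t :: int
  proof -
    have e: "of_int a + of_int b = (of_int t :: complex) ^ p"
    proof -
      have "(of_int (a + b) :: complex) = of_int (t ^ p)" using ab by simp
      thus ?thesis by simp
    qed
    have tP: "(of_int t :: complex) \<notin> P" using nP e C.P_powpos C.p0 by metis
    show ?thesis unfolding e by (rule C.pres_pow_p[OF C.zk_int tP])
  qed
  show ?thesis
  proof (intro conjI impI)
    assume h: "of_int x * zeta p - of_int y \<in> P"
    note m = C.main_case[OF h assms(6) k1 k2]
    obtain t where t: "x + y = t ^ p" using case_nd[OF assms(1,2,9,10,6)] by blast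
    show "pres p P (of_int x + zeta p ^ k * of_int y) = pres p P (zeta_half p k) * pres p P (eps p (k + 1))"
      using m(2) pw[OF t m(1)] by simp
  next
    assume h: "of_int z * zeta p - of_int y \<in> P"
    have czy: "coprime z y" using assms(7) by (simp add: ac_simps)
    note m = C.main_case[OF h czy k1 k2]
    have e: "z ^ p + y ^ p + x ^ p = 0" using assms(9) by (simp add: algebra_simps)
    obtain t where t: "z + y = t ^ p" using case_nd[OF assms(1,2) e assms(10) czy] by blast
    show "pres p P (of_int z + zeta p ^ k * of_int y) = pres p P (zeta_half p k) * pres p P (eps p (k + 1))"
      using m(2) pw[OF t m(1)] by simp
  next
    assume h: "of_int x * zeta p - of_int z \<in> P"
    note m = C.main_case[OF h assms(8) k1 k2]
    have e: "x ^ p + z ^ p + y ^ p = 0" using assms(9) by (simp add: algebra_simps)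
    obtain t where t: "int p * (x + z) = t ^ p" using case_d[OF assms(1,2) e assms(10,8,6)] by blast
    have xzZ: "(of_int x + of_int z :: complex) \<in> ZK p" by (intro C.zk_add C.zk_int)
    have pZ: "(of_nat p :: complex) \<in> ZK p" by (rule C.zk_nat)
    have prodP: "of_nat p * (of_int x + of_int z) \<notin> P"
      by (rule C.notP_mult[OF pZ xzZ C.p_notP m(1)])
    have e2: "of_nat p * (of_int x + of_int z) = (of_int t :: complex) ^ p"
    proof -
      have "(of_int (int p * (x + z)) :: complex) = of_int (t ^ p)" using t by simp
      thus ?thesis by simp
    qed
    have tP: "(of_int t :: complex) \<notin> P" using prodP e2 C.P_powpos C.p0 by metis
    have "pres p P (of_nat p * (of_int x + of_int z)) = 1"
      unfolding e2 by (rule C.pres_pow_p[OF C.zk_int tP])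
    moreover have "pres p P (of_nat p * (of_int x + of_int z)) = pres p P (of_nat p) * pres p P (of_int x + of_int z)"
      by (rule C.pres_mult[OF pZ C.p_notP xzZ m(1)])
    ultimately show "pres p P (of_int x + zeta p ^ k * of_int z) * pres p P (of_nat p) = pres p P (zeta_half p k) * pres p P (eps p (k + 1))"
      using m(2) by (simp add: algebra_simps)
  qed
qed

end
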